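(* For parameters $\mathcal{R}>0$, $M$, $Q$ with $1-\frac{2M}{r}+\frac{Q^2}{r^2}>0$ for all $r>0$ (i.e. $M<|Q|$), define time-symmetric ($K_{ij}=0$) charged thin-shell data by $h=dl^2+r(l)^2(d\theta^2+\sin^2\theta\,d\phi^2)$ with $r(l)=l$ for $l\le\mathcal{R}$ and, for $l\ge\mathcal{R}$, $r(l)$ the solution of $r'=(1-\frac{2M}{r}+\frac{Q^2}{r^2})^{1/2}$ with $r(\mathcal{R})=\mathcal{R}$; the electric field is $0$ inside and $Q/r^2$ outside. Its distributional scalar curvature is $R=16\pi\sigma\,\delta(l-\mathcal{R})+\Theta(l-\mathcal{R})\frac{2Q^2}{r^4}$ with $\sigma=\frac{1}{4\pi\mathcal{R}}\bigl(1-(1-\frac{2M}{\mathcal{R}}+\frac{Q^2}{\mathcal{R}^2})^{1/2}\bigr)$, and the dominant energy condition holds iff $\mathcal{M}:=4\pi\mathcal{R}^2\sigma\ge0$; moreover $M=\mathcal{M}+\frac{Q^2-\mathcal{M}^2}{2\mathcal{R}}$. For $n\ge1$ let $\mathcal{R}_n=\frac1n$, $Q_n=\frac2n-\frac1{n^2}$, $\mathcal{M}_n=\frac1{2n^3}$ and $M_n=\mathcal{M}_n+\frac{Q_n^2-\mathcal{M}_n^2}{2\mathcal{R}_n}$. Then each such datum is asymptotically flat, satisfies the dominant energy condition, is electrovacuum outside the ball of radius $\mathcal{R}_n$, has $M_n<Q_n$ so that its exterior region is untrapped, and satisfies $\frac{Q_n}{2\mathcal{R}_n}=1-\frac1{2n}<1$;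 in particular the inequality $2\mathcal{R}>|Q|$ is sharp: $Q_n/(2\mathcal{R}_n)\to1$, while $\mathcal{R}_n,Q_n,M_n,\mathcal{M}_n\to0$ as $n\to\infty$.
   Context: $\Theta$ is the Heaviside step function, $\delta$ the Dirac delta. For time-symmetric data the dominant energy condition is equivalent to nonnegative scalar curvature $R\ge0$ of $h$, where for this metric $R=-\frac2{r^2}(r'^2+2rr''-1)$. Null expansions $\theta^\pm=\frac2r(r'\pm K_rr)$ (here $K_r=0$); untrapped means $\theta^+\theta^->0$. $M$ is the ADM mass. *)

theory Defs
  imports "HOL-Analysis.Analysis"
begin

definition RNf :: "real \<Rightarrow> real \<Rightarrow> real \<Rightarrow> real" where
  "RNf M Q \<rho> = 1 - 2 * M / \<rho> + Q\<^sup>2 / \<rho>\<^sup>2"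

definition shell_sigma :: "real \<Rightarrow> real \<Rightarrow> real \<Rightarrow> real" where
  "shell_sigma Rs M Q = (1 - sqrt (RNf M Q Rs)) / (4 * pi * Rs)"

definition shell_mass :: "real \<Rightarrow> real \<Rightarrow> real \<Rightarrow> real" where
  "shell_mass Rs M Q = 4 * pi * Rs\<^sup>2 * shell_sigma Rs M Q"

text \<open>Scalar curvature of  dl^2 + r(l)^2 g_{S^2}  at a point where r is smooth.\<close>
definition scal :: "(real \<Rightarrow> real) \<Rightarrow> real \<Rightarrow> real" where
  "scal r l = - 2 / (r l)\<^sup>2 * ((deriv r l)\<^sup>2 + 2 * r l * deriv (deriv r) l - 1)"

text \<open>Null expansions (K_r = 0).\<close>
definition theta_plus :: "(real \<Rightarrow> real) \<Rightarrow> real \<Rightarrow> real" where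
  "theta_plus r l = 2 / r l * (deriv r l + 0 * r l)"
definition theta_minus :: "(real \<Rightarrow> real) \<Rightarrow> real \<Rightarrow> real" where
  "theta_minus r l = 2 / r l * (deriv r l - 0 * r l)"

definition shell_profile :: "real \<Rightarrow> real \<Rightarrow> real \<Rightarrow> (real \<Rightarrow> real) \<Rightarrow> bool" where
  "shell_profile Rs M Q r \<longleftrightarrow>
     (\<forall>l. 0 \<le> l \<and> l \<le> Rs \<longrightarrow> r l = l) \<and>
     (\<forall>l. Rs \<le> l \<longrightarrow> (r has_real_derivative sqrt (RNf M Q (r l))) (at l within {Rs..}))"

text \<open>Dominant energy condition for the distributional scalar curvature
  R = 16 pi sigma delta(l - Rs) + (smooth part): sigma >= 0 and the smooth part >= 0.\<close>
definition shell_DEC :: "real \<Rightarrow> real \<Rightarrow> real \<Rightarrow> (real \<Rightarrow> real) \<Rightarrow> bool" where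
  "shell_DEC Rs M Q r \<longleftrightarrow> shell_sigma Rs M Q \<ge> 0 \<and> (\<forall>l. 0 < l \<and> l \<noteq> Rs \<longrightarrow> scal r l \<ge> 0)"

definition Rn :: "nat \<Rightarrow> real" where "Rn n = 1 / real n"
definition Qn :: "nat \<Rightarrow> real" where "Qn n = 2 / real n - 1 / (real n)\<^sup>2"
definition Mcaln :: "nat \<Rightarrow> real" where "Mcaln n = 1 / (2 * (real n)^3)"
definition Mn :: "nat \<Rightarrow> real" where
  "Mn n = Mcaln n + ((Qn n)\<^sup>2 - (Mcaln n)\<^sup>2) / (2 * Rn n)"

end

theory Submission
  imports Defs "HOL-Real_Asymp.Real_Asymp"
begin

lemma RNf_lower:
  fixes M Q :: real assumes "Q \<noteq> 0"
  shows "RNf M Q x \<ge> 1 - M^2/Q^2"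
proof -
  define u where "u = inverse x"
  have e: "RNf M Q x = 1 - 2*M*u + Q^2*u^2" unfolding RNf_def u_def
    by (simp add: divide_inverse power_inverse)
  have "(Q * u - M/Q)^2 = Q^2*u^2 - 2*M*u + M^2/Q^2" using assms
    by (simp add: power2_eq_square field_simps)
  moreover have "(Q * u - M/Q)^2 \<ge> 0" by simp
  ultimately show ?thesis unfolding e by linarith
qed

lemma profile_props:
  fixes R M Q :: real and r :: "real \<Rightarrow> real"
  assumes R: "R > 0" and MQ: "\<bar>M\<bar> < Q"
    and prof: "shell_profile R M Q r"
  shows "(\<forall>l. 0 < l \<and> l \<noteq> R \<longrightarrow> scal r l \<ge> 0)
     \<and> (\<forall>l>R. scal r l = 2 * (Q / (r l)\<^sup>2)\<^sup>2)
     \<and> (\<forall>l>R. theta_plus r l * theta_minus r l > 0)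
     \<and> filterlim r at_top at_top
     \<and> ((\<lambda>l. deriv r l) \<longlongrightarrow> 1) at_top
     \<and> ((\<lambda>l. (deriv r l - 1) * r l) \<longlongrightarrow> - M) at_top"
proof -
  define F where "F = RNf M Q"
  have Q0: "Q \<noteq> 0" "Q > 0" using MQ by auto
  define c where "c = sqrt (1 - M^2/Q^2)"
  have "\<bar>M\<bar>^2 < Q^2" by (rule power_strict_mono) (use MQ in auto)
  then have "M^2 < Q^2" by simp
  then have "M^2/Q^2 < 1" using Q0 by simp
  then have c0: "c > 0" unfolding c_def by simp
  have Fc: "sqrt (F x) \<ge> c" for x unfolding c_def F_def using RNf_lower[OF Q0(1)] real_sqrt_le_mono by blast
  have Fpos: "F x > 0" for x using Fc[of x] c0
    by (metis less_le_trans not_le real_sqrt_le_0_iff)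
  have inner: "r l = l" if "0 \<le> l" "l \<le> R" for l using prof that unfolding shell_profile_def by blast
  have dwithin: "(r has_real_derivative sqrt (F (r l))) (at l within {R..})" if "R \<le> l" for l
    using prof that unfolding shell_profile_def F_def by blast
  have dat: "(r has_real_derivative sqrt (F (r l))) (at l)" if "R < l" for l
  proof -
    have "(r has_real_derivative sqrt (F (r l))) (at l within {R<..})"
      using dwithin[of l] that by (auto intro: DERIV_subset)
    then show ?thesis using at_within_open[of l "{R<..}"] that by simp
  qed
  have dr: "deriv r l = sqrt (F (r l))" if "R < l" for l using dat[OF that] DERIV_imp_deriv by blast
  have cont: "continuous_on {R..l} r" for l
  proof -
    have "continuous (at x within {R..}) r" if "x \<in> {R..}" for x
      using dwithin[of x] that DERIV_continuous by auto
    then have "continuous_on {R..} r" unfolding continuous_on_eq_continuous_within by blast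
    then show ?thesis by (rule continuous_on_subset) auto
  qed
  have rlow: "r l \<ge> R + c * (l - R)" if "R < l" for l
  proof -
    have "\<And>x. R < x \<Longrightarrow> x < l \<Longrightarrow> r differentiable at x"
      using dat real_differentiable_def by blast
    from MVT[OF that cont this]
    obtain d z where z: "R < z" "z < l" "(r has_real_derivative d) (at z)" "r l - r R = (l - R) * d"
      by blast
    have "d = sqrt (F (r z))" using z dat[of z] DERIV_unique by auto
    then have "d \<ge> c" using Fc by simp
    moreover have "r R = R" using inner R by simp
    moreover have "(l - R) * d \<ge> (l - R) * c" using that \<open>d \<ge> c\<close> by (intro mult_left_mono) auto
    ultimately show ?thesis using z by (simp add: algebra_simps)
  qed
  have rpos: "r l > 0" if "R < l" for l
    proof -
    have "c * (l - R) > 0" using c0 that by simp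
    then show ?thesis using rlow[OF that] R by linarith
  qed
  have hF: "(F has_real_derivative (2*M/x^2 - 2*Q^2/x^3)) (at x)" if "x > 0" for x
    unfolding F_def RNf_def using that
    by (auto intro!: derivative_eq_intros simp: power2_eq_square power3_eq_cube field_simps)
  have hg: "((\<lambda>y. sqrt (F (r y))) has_real_derivative (M/(r l)^2 - Q^2/(r l)^3)) (at l)" if "R < l" for l
  proof -
    show ?thesis
      using DERIV_chain2[OF DERIV_real_sqrt[OF Fpos[of "r l"]] DERIV_chain2[OF hF[OF rpos[OF that]] dat[OF that]]]
    proof (rule DERIV_cong)
      show "inverse (sqrt (F (r l))) / 2 * ((2*M/(r l)^2 - 2*Q^2/(r l)^3) * sqrt (F (r l)))
       = M/(r l)^2 - Q^2/(r l)^3" using Fpos[of "r l"] by (simp add: field_simps)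
    qed
  qed
  have ddr: "deriv (deriv r) l = M/(r l)^2 - Q^2/(r l)^3" if "R < l" for l
    by (rule DERIV_imp_deriv, rule has_field_derivative_transform_within_open[OF hg[OF that], of "{R<..}"])
       (use that dr in auto)
  have scal_out: "scal r l = 2 * (Q / (r l)\<^sup>2)\<^sup>2" if "R < l" for l
  proof -
    have sq: "(sqrt (F (r l)))^2 = F (r l)" using Fpos[of "r l"] by simp
    show ?thesis unfolding scal_def dr[OF that] ddr[OF that] sq using rpos[OF that]
      by (simp add: F_def RNf_def power2_eq_square power3_eq_cube field_simps)
  qed
  have scal_in: "scal r l = 0" if "0 < l" "l < R" for l
  proof -
    have d1: "deriv r y = 1" if "0 < y" "y < R" for y
    proof -
      have "(r has_real_derivative 1) (at y)"
        by (rule has_field_derivative_transform_within_open[OF DERIV_ident, of "{0<..<R}"])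
           (use that inner in auto)
      then show ?thesis by (rule DERIV_imp_deriv)
    qed
    have "deriv (deriv r) l = 0"
      by (rule DERIV_imp_deriv, rule has_field_derivative_transform_within_open[OF DERIV_const, of "{0<..<R}"])
         (use that d1 in auto)
    then show ?thesis unfolding scal_def d1[OF that] by simp
  qed
  have theta: "theta_plus r l * theta_minus r l > 0" if "R < l" for l
    unfolding theta_plus_def theta_minus_def dr[OF that] using rpos[OF that] Fpos[of "r l"] by simp
  have lin: "filterlim (\<lambda>l. R + c * (l - R)) at_top at_top" using c0 by real_asymp
  have rlim: "filterlim r at_top at_top"
    by (rule filterlim_at_top_mono[OF lin]) (use eventually_mono[OF eventually_gt_at_top[of R] rlow] in simp)
  have l1: "((\<lambda>x. sqrt (F x)) \<longlongrightarrow> 1) at_top" unfolding F_def RNf_def by real_asymp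
  have l2: "((\<lambda>x. (sqrt (F x) - 1) * x) \<longlongrightarrow> -M) at_top" unfolding F_def RNf_def by real_asymp
  have ev: "eventually (\<lambda>l. R < l) at_top" by (rule eventually_gt_at_top)
  have lim1: "((\<lambda>l. deriv r l) \<longlongrightarrow> 1) at_top"
  proof -
    have "((\<lambda>l. sqrt (F (r l))) \<longlongrightarrow> 1) at_top" using filterlim_compose[OF l1 rlim] by simp
    then show ?thesis by (rule Lim_transform_eventually) (rule eventually_mono[OF ev], simp add: dr)
  qed
  have lim2: "((\<lambda>l. (deriv r l - 1) * r l) \<longlongrightarrow> - M) at_top"
  proof -
    have "((\<lambda>l. (sqrt (F (r l)) - 1) * r l) \<longlongrightarrow> -M) at_top" using filterlim_compose[OF l2 rlim] by simp
    then show ?thesis by (rule Lim_transform_eventually) (rule eventually_mono[OF ev], simp add: dr)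
  qed
  have "\<forall>l. 0 < l \<and> l \<noteq> R \<longrightarrow> scal r l \<ge> 0"
  proof (intro allI impI)
    fix l assume "0 < l \<and> l \<noteq> R"
    then consider "0 < l" "l < R" | "R < l" by linarith
    then show "scal r l \<ge> 0" using scal_out scal_in by cases auto
  qed
  then show ?thesis using scal_out theta rlim lim1 lim2 by blast
qed

lemma numerics:
  fixes n :: nat assumes n1: "n \<ge> 1"
  shows "\<bar>Mn n\<bar> < Qn n" "Mn n < Qn n" "Rn n > 0"
    "RNf (Mn n) (Qn n) (Rn n) = (1 - 1/(2*(real n)^2))^2"
    "shell_mass (Rn n) (Mn n) (Qn n) = Mcaln n"
    "shell_sigma (Rn n) (Mn n) (Qn n) \<ge> 0"
    "Qn n / (2 * Rn n) = 1 - 1 / (2 * real n)"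
    "Qn n / (2 * Rn n) < 1"
proof -
  define N where "N = real n"
  have N1: "N \<ge> 1" using n1 unfolding N_def by simp
  have Mf: "Mn n = (4*N^2 + 4*N^2*(2*N-1)^2 - 1)/(8*N^5)" using N1
    unfolding Mn_def Mcaln_def Qn_def Rn_def N_def[symmetric]
    by (simp add: field_simps) algebra
  have Qf: "Qn n = (2*N-1)/N^2" using N1 unfolding Qn_def N_def[symmetric]
    by (simp add: field_simps power2_eq_square)
  have N2: "N^2 \<ge> 1" using N1 by (simp add: one_le_power)
  have "0 \<le> 4*N^2*(2*N-1)^2" by simp
  then have "4*N^2 + 4*N^2*(2*N-1)^2 - 1 > 0" using N2 by linarith
  then have Mpos: "Mn n > 0" unfolding Mf using N1 by simp
  have "4*N^2 + 4*N^2*(2*N-1)^2 - 1 < 8*N^3*(2*N-1)"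
  proof -
    have "8*N^2 * (N - 1) \<ge> 0" using N1 by simp
    then show ?thesis by (simp add: power2_eq_square power3_eq_cube algebra_simps)
  qed
  then have "(4*N^2 + 4*N^2*(2*N-1)^2 - 1)/(8*N^3) < 2*N-1" using N1
    by (simp add: pos_divide_less_eq mult.commute)
  then have "(4*N^2 + 4*N^2*(2*N-1)^2 - 1)/(8*N^3)/N^2 < (2*N-1)/N^2" using N1
    by (intro divide_strict_right_mono) auto
  moreover have "(4*N^2 + 4*N^2*(2*N-1)^2 - 1)/(8*N^3)/N^2 = (4*N^2 + 4*N^2*(2*N-1)^2 - 1)/(8*N^5)"
    using N1 by (simp add: field_simps eval_nat_numeral)
  ultimately have "(4*N^2 + 4*N^2*(2*N-1)^2 - 1)/(8*N^5) < (2*N-1)/N^2" by metis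
  then show MQ: "Mn n < Qn n" unfolding Mf Qf .
  then show "\<bar>Mn n\<bar> < Qn n" using Mpos by simp
  show "Rn n > 0" unfolding Rn_def using N1 N_def by simp
  show RF: "RNf (Mn n) (Qn n) (Rn n) = (1 - 1/(2*(real n)^2))^2" using N1
    unfolding RNf_def Mn_def Mcaln_def Qn_def Rn_def N_def[symmetric]
    by (simp add: field_simps) algebra
  have pos: "1 - 1/(2*(real n)^2) \<ge> 0" using N2 unfolding N_def[symmetric]
    by (simp add: divide_le_eq)
  have sq: "sqrt (RNf (Mn n) (Qn n) (Rn n)) = 1 - 1/(2*(real n)^2)" unfolding RF using pos by simp
  show "shell_mass (Rn n) (Mn n) (Qn n) = Mcaln n"
    unfolding shell_mass_def shell_sigma_def sq using N1 unfolding Rn_def Mcaln_def N_def[symmetric]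
    by (simp add: field_simps power2_eq_square power3_eq_cube)
  show "shell_sigma (Rn n) (Mn n) (Qn n) \<ge> 0"
    unfolding shell_sigma_def sq using N1 unfolding Rn_def N_def[symmetric]
    by (simp add: field_simps)
  show QR: "Qn n / (2 * Rn n) = 1 - 1 / (2 * real n)"
    unfolding Qn_def Rn_def N_def[symmetric] using N1 by (simp add: field_simps power2_eq_square)
  show "Qn n / (2 * Rn n) < 1" unfolding QR using N1 N_def by simp
qed

theorem theorem1:
  fixes n :: nat and r :: "real \<Rightarrow> real"
  assumes n1: "n \<ge> 1"
    and prof: "shell_profile (Rn n) (Mn n) (Qn n) r"
  shows
    "(\<forall>\<rho>>0. RNf (Mn n) (Qn n) \<rho> > 0)
     \<and> shell_mass (Rn n) (Mn n) (Qn n) = Mcaln n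
     \<and> shell_DEC (Rn n) (Mn n) (Qn n) r
     \<and> (\<forall>l>Rn n. scal r l = 2 * (Qn n / (r l)\<^sup>2)\<^sup>2)
     \<and> Mn n < Qn n
     \<and> (\<forall>l>Rn n. theta_plus r l * theta_minus r l > 0)
     \<and> filterlim r at_top at_top
     \<and> ((\<lambda>l. deriv r l) \<longlongrightarrow> 1) at_top
     \<and> ((\<lambda>l. (deriv r l - 1) * r l) \<longlongrightarrow> - Mn n) at_top
     \<and> Qn n / (2 * Rn n) = 1 - 1 / (2 * real n)
     \<and> Qn n / (2 * Rn n) < 1
     \<and> (\<lambda>k. Qn k / (2 * Rn k)) \<longlonglongrightarrow> 1
     \<and> Rn \<longlonglongrightarrow> 0 \<and> Qn \<longlonglongrightarrow> 0 \<and> Mn \<longlonglongrightarrow> 0 \<and> Mcaln \<longlonglongrightarrow> 0"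
  proof -
  note nm = numerics[OF n1]
  note pp = profile_props[OF nm(3) nm(1) prof]
  have Qpos: "Qn n > 0" using nm(1) by linarith
  have "\<bar>Mn n\<bar>^2 < (Qn n)^2" by (rule power_strict_mono) (use nm(1) in auto)
  then have "(Mn n)^2/(Qn n)^2 < 1" using Qpos by simp
  then have rn: "\<forall>\<rho>>0. RNf (Mn n) (Qn n) \<rho> > 0"
    using RNf_lower[of "Qn n" "Mn n"] Qpos by (smt (verit))
  have dec: "shell_DEC (Rn n) (Mn n) (Qn n) r" unfolding shell_DEC_def using nm pp by blast
  have l1: "(\<lambda>k. Qn k / (2 * Rn k)) \<longlonglongrightarrow> 1" unfolding Qn_def Rn_def by real_asymp
  have l2: "Rn \<longlonglongrightarrow> 0" unfolding Rn_def by real_asymp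
  have l3: "Qn \<longlonglongrightarrow> 0" unfolding Qn_def by real_asymp
  have l4: "Mn \<longlonglongrightarrow> 0" unfolding Mn_def Mcaln_def Qn_def Rn_def by real_asymp
  have l5: "Mcaln \<longlonglongrightarrow> 0" unfolding Mcaln_def by real_asymp
  show ?thesis using rn dec nm pp l1 l2 l3 l4 l5 by blast
qed

end
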